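(* Let $N\ge1$, $0\le k\le N$, and $I=\{N-k+1,\dots,N\}$. Then, as polynomials in $\xi_1,\dots,\xi_N$, \[ \sum_{\substack{J\subset\{1,\dots,N\}\\|J|=k}}\operatorname{sgn}(I,J)\prod_{i\in J}(\xi_i-1)^{N-k}\prod_{\substack{i<j\\ i,j\in J}}(\xi_j-\xi_i)\prod_{\substack{i<j\\ i,j\in J^c}}(\xi_j-\xi_i)=\prod_{1\le i<j\le N}(\xi_j-\xi_i). \]
   Context: For $I,J\subset\{1,\dots,N\}$ with $|I|=|J|=k$, write $I=\{i_1<\dots<i_k\}$, $I^c=\{1,\dots,N\}\setminus I=\{i_{k+1}<\dots<i_N\}$, $J=\{j_1<\dots<j_k\}$, $J^c=\{j_{k+1}<\dots<j_N\}$; $\operatorname{sgn}(I,J)$ is the sign of the permutation sending $i_m\mapsto j_m$ for $m=1,\dots,N$. *)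

theory Defs
  imports "HOL-Combinatorics.Permutations"
begin

definition sgnIJ :: "nat \<Rightarrow> nat set \<Rightarrow> nat set \<Rightarrow> int" where
  "sgnIJ N I J =
     (let is = sorted_list_of_set I @ sorted_list_of_set ({1..N} - I);
          js = sorted_list_of_set J @ sorted_list_of_set ({1..N} - J)
      in sign (\<lambda>x. case map_of (zip is js) x of Some y \<Rightarrow> y | None \<Rightarrow> x))"

end

theory Submission
  imports Defs "Jordan_Normal_Form.Determinant"
begin

lemma vdm_pairs_split:
  "{(i,j). i<j \<and> j < Suc n} = (\<lambda>j. (0::nat, Suc j)) ` {..<n} \<union> (\<lambda>(i,j). (Suc i, Suc j)) ` {(i,j). i<j \<and> j<n}"
  unfolding set_eq_iff
proof (intro allI)
  fix p :: "nat \<times> nat"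
  obtain a b where p: "p = (a,b)" by (cases p)
  show "p \<in> {(i,j). i<j \<and> j < Suc n} \<longleftrightarrow> p \<in> (\<lambda>j. (0::nat, Suc j)) ` {..<n} \<union> (\<lambda>(i,j). (Suc i, Suc j)) ` {(i,j). i<j \<and> j<n}"
    unfolding p by (cases a; cases b) (auto simp: image_iff)
qed

lemma vdm_prod_split:
  fixes x :: "nat \<Rightarrow> 'a::comm_ring_1"
  shows "(\<Prod>(i,j)\<in>{(i,j). i<j \<and> j<Suc n}. x j - x i) =
   (\<Prod>i = 0..<n. x (Suc i) - x 0) * (\<Prod>(i,j)\<in>{(i,j). i<j \<and> j<n}. x (Suc j) - x (Suc i))"
proof -
  have fin: "finite {(i,j). i<j \<and> j<(n::nat)}"
    by (rule finite_subset[of _ "{..<n} \<times> {..<n}"]) auto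
  have "(\<Prod>(i,j)\<in>{(i,j). i<j \<and> j<Suc n}. x j - x i) =
    (\<Prod>(i,j)\<in>(\<lambda>j. (0::nat, Suc j)) ` {..<n}. x j - x i) * (\<Prod>(i,j)\<in>(\<lambda>(i,j). (Suc i, Suc j)) ` {(i,j). i<j \<and> j<n}. x j - x i)"
    unfolding vdm_pairs_split
    by (rule prod.union_disjoint) (use fin in auto)
  also have "(\<Prod>(i,j)\<in>(\<lambda>j. (0::nat, Suc j)) ` {..<n}. x j - x i) = (\<Prod>i = 0..<n. x (Suc i) - x 0)"
    by (subst prod.reindex) (auto simp: inj_on_def atLeast0LessThan)
  also have "(\<Prod>(i,j)\<in>(\<lambda>(i,j). (Suc i, Suc j)) ` {(i,j). i<j \<and> j<n}. x j - x i) = (\<Prod>(i,j)\<in>{(i,j). i<j \<and> j<n}. x (Suc j) - x (Suc i))"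
    by (subst prod.reindex) (auto simp: inj_on_def intro!: prod.cong)
  finally show ?thesis .
qed

lemma aux_sum:
  fixes x :: "nat \<Rightarrow> 'a::comm_ring_1"
  assumes "i < Suc n"
  shows "(\<Sum>l\<in>{0..<Suc n}. (if l = i then x j ^ i else 0) + (if i = Suc l then - x 0 * x j ^ l else 0))
    = (if i = 0 then 1 else x j ^ i - x 0 * x j ^ (i - 1))"
proof (cases i)
  case 0
  then show ?thesis using assms by (simp add: sum.distrib)
next
  case (Suc i')
  have "(\<Sum>l\<in>{0..<Suc n}. (if i = Suc l then - x 0 * x j ^ l else 0)) = (\<Sum>l\<in>{0..<Suc n}. (if l = i' then - x 0 * x j ^ l else 0))"
    using Suc by (intro sum.cong) auto
  also have "\<dots> = - x 0 * x j ^ i'" using Suc assms by simp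
  finally show ?thesis using Suc assms by (simp add: sum.distrib)
qed

lemma aux_zero:
  fixes x :: "nat \<Rightarrow> 'a::comm_ring_1"
  assumes "i \<noteq> 0" shows "x 0 ^ i - x 0 * x 0 ^ (i - 1) = 0"
proof -
  from assms obtain i' where "i = Suc i'" by (cases i) auto
  then show ?thesis by simp
qed

lemma vandermonde_det:
  fixes x :: "nat \<Rightarrow> 'a::comm_ring_1"
  shows "det (mat n n (\<lambda>(i,j). x j ^ i)) = (\<Prod>(i,j)\<in>{(i,j). i<j \<and> j<n}. x j - x i)"
proof (induction n arbitrary: x)
  case 0
  show ?case by (simp add: det_def)
next
  case (Suc n)
  define A :: "'a mat" where "A = mat (Suc n) (Suc n) (\<lambda>(i,j). x j ^ i)"
  define L :: "'a mat" where "L = mat (Suc n) (Suc n) (\<lambda>(i,j). if i = j then 1 else if i = Suc j then - x 0 else 0)"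
  define B where "B = L * A"
  have A: "A \<in> carrier_mat (Suc n) (Suc n)" and L: "L \<in> carrier_mat (Suc n) (Suc n)"
    by (auto simp: A_def L_def)
  have detL: "det L = 1"
    by (subst det_lower_triangular[OF _ L]) (auto simp: L_def prod_list_diag_prod)
  have detB: "det B = det A" unfolding B_def using det_mult[OF L A] detL by simp
  have Bij: "B $$ (i,j) = (if i = 0 then 1 else x j ^ i - x 0 * x j ^ (i - 1))" if "i < Suc n" "j < Suc n" for i j
  proof -
    have "B $$ (i,j) = (\<Sum>l\<in>{0..<Suc n}. L $$ (i,l) * A $$ (l,j))"
      using that L A by (simp add: B_def scalar_prod_def)
    also have "\<dots> = (\<Sum>l\<in>{0..<Suc n}. (if l = i then x j ^ i else 0) + (if i = Suc l then - x 0 * x j ^ l else 0))"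
      using that by (intro sum.cong) (auto simp: L_def A_def)
    also have "\<dots> = (if i = 0 then 1 else x j ^ i - x 0 * x j ^ (i - 1))"
      using that(1) by (rule aux_sum)
    finally show ?thesis .
  qed
  define C :: "'a mat" where "C = mat n n (\<lambda>(i,j). x (Suc j) ^ i * (x (Suc j) - x 0))"
  have B: "B \<in> carrier_mat (Suc n) (Suc n)" using L A by (simp add: B_def)
  have "det B = (\<Sum>i<Suc n. B $$ (i,0) * cofactor B i 0)"
    by (rule laplace_expansion_column[OF B]) simp
  also have "\<dots> = (\<Sum>i<Suc n. (if i = 0 then cofactor B 0 0 else 0))"
  proof (intro sum.cong refl)
    fix i assume "i \<in> {..<Suc n}"
    then show "B $$ (i,0) * cofactor B i 0 = (if i = 0 then cofactor B 0 0 else 0)"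
      by (cases i) (auto simp: Bij)
  qed
  also have "\<dots> = det (mat_delete B 0 0)" by (simp add: cofactor_def)
  also have "mat_delete B 0 0 = C"
    using B by (intro eq_matI) (auto simp: mat_delete_def C_def Bij algebra_simps)
  finally have dBC: "det B = det C" .
  have "det C = (\<Sum>p\<in>{p. p permutes {0..<n}}. signof p *
      ((\<Prod>i = 0..<n. x (Suc (p i)) ^ i) * (\<Prod>i = 0..<n. x (Suc (p i)) - x 0)))"
    unfolding det_def C_def
    by (auto intro!: sum.cong simp: prod.distrib permutes_in_image)
  also have "\<dots> = (\<Sum>p\<in>{p. p permutes {0..<n}}. signof p *
      (\<Prod>i = 0..<n. x (Suc (p i)) ^ i)) * (\<Prod>i = 0..<n. x (Suc i) - x 0)"
  proof -
    have "(\<Prod>i = 0..<n. x (Suc (p i)) - x 0) = (\<Prod>i = 0..<n. x (Suc i) - x 0)" if "p permutes {0..<n}" for p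
      using prod.permute[OF that, of "\<lambda>i. x (Suc i) - x 0"] by (simp add: o_def)
    then show ?thesis by (simp add: sum_distrib_right mult.assoc)
  qed
  also have "(\<Sum>p\<in>{p. p permutes {0..<n}}. signof p * (\<Prod>i = 0..<n. x (Suc (p i)) ^ i))
     = det (mat n n (\<lambda>(i,j). (x \<circ> Suc) j ^ i))"
    unfolding det_def by (auto intro!: sum.cong prod.cong simp: permutes_in_image)
  also have "\<dots> = (\<Prod>(i,j)\<in>{(i,j). i<j \<and> j<n}. x (Suc j) - x (Suc i))"
    using Suc.IH[of "x \<circ> Suc"] by simp
  finally have dC: "det C = (\<Prod>(i,j)\<in>{(i,j). i<j \<and> j<n}. x (Suc j) - x (Suc i)) * (\<Prod>i = 0..<n. x (Suc i) - x 0)"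
    by (simp add: mult.commute)
  have "det A = (\<Prod>(i,j)\<in>{(i,j). i<j \<and> j<n}. x (Suc j) - x (Suc i)) * (\<Prod>i = 0..<n. x (Suc i) - x 0)"
    using detB dBC dC by simp
  then show ?case unfolding A_def vdm_prod_split by (simp add: mult.commute)
qed

definition LS :: "nat set \<Rightarrow> (nat \<Rightarrow> nat \<Rightarrow> 'a::comm_ring_1) \<Rightarrow> 'a" where
  "LS A F = (\<Sum>\<pi>\<in>{\<pi>. \<pi> permutes A}. of_int (sign \<pi>) * (\<Prod>r\<in>A. F r (\<pi> r)))"

lemma LS_vdm:
  fixes x :: "nat \<Rightarrow> 'a::comm_ring_1"
  shows "LS {0..<m} (\<lambda>r s. x s ^ r) = (\<Prod>(i,j)\<in>{(i,j). i<j \<and> j<m}. x j - x i)"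
proof -
  have "LS {0..<m} (\<lambda>r s. x s ^ r) = det (mat m m (\<lambda>(i,j). x j ^ i))"
    unfolding LS_def det_def by (auto intro!: sum.cong prod.cong simp: permutes_in_image)
  then show ?thesis by (simp add: vandermonde_det)
qed

lemma LS_reindex:
  assumes f: "bij_betw f A B" and fin: "finite A"
  shows "LS B G = LS A (\<lambda>r s. G (f r) (f s))"
proof -
  define \<Phi> where "\<Phi> = (\<lambda>\<pi> x. if x \<in> B then f (\<pi> (inv_into A f x)) else x)"
  have bij: "bij_betw \<Phi> {\<pi>. \<pi> permutes A} {\<pi>. \<pi> permutes B}"
    unfolding \<Phi>_def by (rule bij_betw_permutations[OF f])
  have inj: "inj_on f A" using f by (simp add: bij_betw_def)
  have "LS B G = (\<Sum>\<pi>\<in>{\<pi>. \<pi> permutes A}. of_int (sign (\<Phi> \<pi>)) * (\<Prod>r\<in>B. G r (\<Phi> \<pi> r)))"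
    unfolding LS_def by (rule sum.reindex_bij_betw[OF bij, symmetric])
  also have "\<dots> = LS A (\<lambda>r s. G (f r) (f s))"
    unfolding LS_def
  proof (intro sum.cong refl)
    fix \<pi> assume "\<pi> \<in> {\<pi>. \<pi> permutes A}"
    then have p: "\<pi> permutes A" by simp
    interpret permutes_bij_finite \<pi> A B f "inv_into A f" "\<Phi> \<pi>"
      by unfold_locales (use p f fin inj in \<open>auto simp: \<Phi>_def\<close>)
    have s: "sign (\<Phi> \<pi>) = sign \<pi>" by (rule sign_p')
    have "(\<Prod>r\<in>B. G r (\<Phi> \<pi> r)) = (\<Prod>s\<in>A. G (f s) (\<Phi> \<pi> (f s)))"
      by (rule prod.reindex_bij_betw[OF f, symmetric])
    also have "\<dots> = (\<Prod>s\<in>A. G (f s) (f (\<pi> s)))"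
      using f inj by (intro prod.cong refl) (auto simp: \<Phi>_def bij_betw_def)
    finally show "of_int (sign (\<Phi> \<pi>)) * (\<Prod>r\<in>B. G r (\<Phi> \<pi> r)) =
       of_int (sign \<pi>) * (\<Prod>r\<in>A. G (f r) (f (\<pi> r)))" using s by simp
  qed
  finally show ?thesis .
qed

lemma LS_factor:
  assumes "finite A"
  shows "LS A (\<lambda>r s. d s * G r s) = (\<Prod>s\<in>A. d s) * LS A G"
  unfolding LS_def sum_distrib_left
proof (intro sum.cong refl)
  fix \<pi> assume "\<pi> \<in> {\<pi>. \<pi> permutes A}"
  then have p: "\<pi> permutes A" by simp
  have "(\<Prod>r\<in>A. d (\<pi> r)) = (\<Prod>s\<in>A. d s)"
    using prod.permute[OF p, of d] by (simp add: o_def)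
  then show "of_int (sign \<pi>) * (\<Prod>r\<in>A. d (\<pi> r) * G r (\<pi> r)) =
     (\<Prod>s\<in>A. d s) * (of_int (sign \<pi>) * (\<Prod>r\<in>A. G r (\<pi> r)))"
    by (simp add: prod.distrib mult_ac)
qed

abbreviation en :: "nat set \<Rightarrow> nat \<Rightarrow> nat" where
  "en S i \<equiv> sorted_list_of_set S ! i"

lemma en_bij: "finite S \<Longrightarrow> bij_betw (en S) {0..<card S} S"
  by (rule bij_betw_nth) (auto simp: distinct_sorted_list_of_set)

lemma en_less: "finite S \<Longrightarrow> a < b \<Longrightarrow> b < card S \<Longrightarrow> en S a < en S b"
  using sorted_wrt_nth_less[OF strict_sorted_list_of_set[of S]] by simp

lemma en_less_iff: "finite S \<Longrightarrow> a < card S \<Longrightarrow> b < card S \<Longrightarrow> en S a < en S b \<longleftrightarrow> a < b"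
  by (metis en_less linorder_neqE_nat order_less_asym)

lemma en_pairs:
  fixes g :: "nat \<Rightarrow> nat \<Rightarrow> 'a::comm_monoid_mult"
  assumes S: "finite S"
  shows "(\<Prod>(a,b)\<in>{(a,b). a<b \<and> b<card S}. g (en S a) (en S b)) = (\<Prod>(i,j)\<in>{(i,j). i\<in>S \<and> j\<in>S \<and> i<j}. g i j)"
proof -
  have bij: "bij_betw (\<lambda>(a,b). (en S a, en S b)) {(a,b). a<b \<and> b<card S} {(i,j). i\<in>S \<and> j\<in>S \<and> i<j}"
    unfolding bij_betw_def
  proof (intro conjI)
    have inj: "inj_on (en S) {0..<card S}" using en_bij[OF S] by (simp add: bij_betw_def)
    show "inj_on (\<lambda>(a,b). (en S a, en S b)) {(a,b). a<b \<and> b<card S}"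
      using inj by (auto simp: inj_on_def)
    show "(\<lambda>(a,b). (en S a, en S b)) ` {(a,b). a<b \<and> b<card S} = {(i,j). i\<in>S \<and> j\<in>S \<and> i<j}"
    proof (intro equalityI subsetI)
      fix p assume "p \<in> (\<lambda>(a,b). (en S a, en S b)) ` {(a,b). a<b \<and> b<card S}"
      then obtain a b where "p = (en S a, en S b)" "a < b" "b < card S" by auto
      then show "p \<in> {(i,j). i\<in>S \<and> j\<in>S \<and> i<j}"
        using en_bij[OF S] en_less[OF S] by (auto dest: bij_betwE)
    next
      fix p assume "p \<in> {(i,j). i\<in>S \<and> j\<in>S \<and> i<j}"
      then obtain i j where p: "p = (i,j)" "i \<in> S" "j \<in> S" "i < j" by auto
      obtain a where a: "a < card S" "en S a = i"
        using p(2) en_bij[OF S] by (metis atLeastLessThan_iff bij_betw_iff_bijections)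
      obtain b where b: "b < card S" "en S b = j"
        using p(3) en_bij[OF S] by (metis atLeastLessThan_iff bij_betw_iff_bijections)
      have "a < b" using en_less_iff[OF S a(1) b(1)] a b p(4) by simp
      then show "p \<in> (\<lambda>(a,b). (en S a, en S b)) ` {(a,b). a<b \<and> b<card S}"
        using a b p(1) by (auto intro!: image_eqI[of _ _ "(a,b)"])
    qed
  qed
  show ?thesis using prod.reindex_bij_betw[OF bij, of "\<lambda>(i,j). g i j"] by (simp add: case_prod_unfold)
qed

lemma map_of_perm:
  assumes d: "distinct xs" "distinct ys" and l: "length xs = length ys" and s: "set xs = U" "set ys = U"
  defines "f \<equiv> (\<lambda>x. case map_of (zip xs ys) x of Some y \<Rightarrow> y | None \<Rightarrow> x)"
  shows "f permutes U" "\<And>m. m < length xs \<Longrightarrow> f (xs ! m) = ys ! m"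
proof -
  show fn: "\<And>m. m < length xs \<Longrightarrow> f (xs ! m) = ys ! m"
    unfolding f_def using map_of_zip_nth[OF l d(1)] l by simp
  show "f permutes U"
  proof (rule bij_imp_permutes)
    have "bij_betw (f \<circ> (!) xs) {..<length xs} U"
    proof -
      have "bij_betw ((!) ys) {..<length xs} U" using d(2) l s(2) by (intro bij_betw_nth) auto
      then show ?thesis by (rule bij_betw_cong[THEN iffD1, rotated]) (simp add: fn)
    qed
    moreover have "bij_betw ((!) xs) {..<length xs} U" using d(1) s(1) by (intro bij_betw_nth) auto
    ultimately show "bij_betw f U U" using bij_betw_comp_iff by blast
  next
    fix x assume "x \<notin> U"
    then have "map_of (zip xs ys) x = None" using l s by simp
    then show "f x = x" unfolding f_def by simp
  qed
qed

lemma sum_sum_prod: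
  fixes c :: "'a::comm_ring_1"
  shows "(\<Sum>x\<in>A. \<Sum>y\<in>B. c * f x * g y) = c * sum f A * sum g B"
  by (simp add: sum_distrib_left sum_distrib_right mult.assoc sum.swap[of _ B])

lemma laplace_gen:
  fixes F :: "nat \<Rightarrow> nat \<Rightarrow> 'a::comm_ring_1"
  assumes U: "finite U" and IU: "I \<subseteq> U"
    and tau: "\<And>J. J \<subseteq> U \<Longrightarrow> card J = card I \<Longrightarrow> \<tau> J permutes U \<and> \<tau> J ` I = J"
  shows "LS U F = (\<Sum>J\<in>{J. J \<subseteq> U \<and> card J = card I}.
     of_int (sign (\<tau> J)) * LS I (\<lambda>r s. F r (\<tau> J s)) * LS (U - I) (\<lambda>r s. F r (\<tau> J s)))"
proof -
  define P where "P = {\<sigma>. \<sigma> permutes U}"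
  define JJ where "JJ = {J. J \<subseteq> U \<and> card J = card I}"
  define trm where "trm = (\<lambda>\<sigma>. of_int (sign \<sigma>) * (\<Prod>r\<in>U. F r (\<sigma> r)) :: 'a)"
  have finP: "finite P" unfolding P_def using U by (rule finite_permutations)
  have finJJ: "finite JJ" unfolding JJ_def using U by (auto intro: finite_subset[of _ "Pow U"])
  have finI: "finite I" using U IU by (rule finite_subset[rotated])
  have img: "(\<lambda>\<sigma>. \<sigma> ` I) ` P \<subseteq> JJ"
  proof
    fix J assume "J \<in> (\<lambda>\<sigma>. \<sigma> ` I) ` P"
    then obtain \<sigma> where s: "\<sigma> permutes U" "J = \<sigma> ` I" by (auto simp: P_def)
    have "\<sigma> ` I \<subseteq> U" using s(1) IU by (auto simp: permutes_in_image)
    moreover have "card (\<sigma> ` I) = card I"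
      using s(1) by (intro card_image inj_on_subset[OF permutes_inj]) auto
    ultimately show "J \<in> JJ" using s by (simp add: JJ_def)
  qed
  have "LS U F = sum trm P" unfolding LS_def P_def trm_def by simp
  also have "\<dots> = (\<Sum>J\<in>JJ. sum trm {\<sigma>. \<sigma> \<in> P \<and> \<sigma> ` I = J})"
    by (rule sum.group[OF finP finJJ img, symmetric])
  also have "\<dots> = (\<Sum>J\<in>JJ. of_int (sign (\<tau> J)) * LS I (\<lambda>r s. F r (\<tau> J s)) * LS (U - I) (\<lambda>r s. F r (\<tau> J s)))"
  proof (intro sum.cong refl)
    fix J assume "J \<in> JJ"
    then have tJ: "\<tau> J permutes U" "\<tau> J ` I = J" using tau by (auto simp: JJ_def)
    define t where "t = \<tau> J"
    have t: "t permutes U" "t ` I = J" using tJ by (auto simp: t_def)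
    define h where "h = (\<lambda>(p1::nat\<Rightarrow>nat, p2::nat\<Rightarrow>nat). t \<circ> p1 \<circ> p2)"
    define Q1 where "Q1 = {p. p permutes I}"
    define Q2 where "Q2 = {p. p permutes (U - I)}"
    have tinj: "inj t" using t(1) by (rule permutes_inj)
    have bij: "bij_betw h (Q1 \<times> Q2) {\<sigma>. \<sigma> \<in> P \<and> \<sigma> ` I = J}"
      unfolding bij_betw_def
    proof (intro conjI)
      show "inj_on h (Q1 \<times> Q2)"
      proof (rule inj_onI, clarify)
        fix p1 p2 q1 q2 assume a: "p1 \<in> Q1" "p2 \<in> Q2" "q1 \<in> Q1" "q2 \<in> Q2" "h (p1, p2) = h (q1, q2)"
        have p1: "p1 permutes I" and p2: "p2 permutes U - I" and q1: "q1 permutes I" and q2: "q2 permutes U - I"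
          using a by (auto simp: Q1_def Q2_def)
        have e: "p1 (p2 x) = q1 (q2 x)" for x
        proof -
          have "t (p1 (p2 x)) = t (q1 (q2 x))" using a(5) unfolding h_def by (metis case_prod_conv comp_apply)
          then show ?thesis using tinj by (simp add: inj_eq)
        qed
        have "p1 = q1"
        proof
          fix x show "p1 x = q1 x"
          proof (cases "x \<in> I")
            case True
            then have "p2 x = x" "q2 x = x" using p2 q2 by (auto intro: permutes_not_in)
            then show ?thesis using e[of x] by simp
          next
            case False then show ?thesis using p1 q1 by (simp add: permutes_not_in)
          qed
        qed
        moreover have "p2 = q2"
        proof
          fix x show "p2 x = q2 x"
          proof (cases "x \<in> U - I")
            case True
            then have "p2 x \<in> U - I" "q2 x \<in> U - I" using permutes_in_image[OF p2] permutes_in_image[OF q2] by blast+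
            then have "p1 (p2 x) = p2 x" "q1 (q2 x) = q2 x" using p1 q1 by (auto intro: permutes_not_in)
            then show ?thesis using e[of x] by simp
          next
            case False then show ?thesis using p2 q2 by (simp add: permutes_not_in)
          qed
        qed
        ultimately show "p1 = q1 \<and> p2 = q2" by simp
      qed
    next
      show "h ` (Q1 \<times> Q2) = {\<sigma>. \<sigma> \<in> P \<and> \<sigma> ` I = J}"
      proof (intro equalityI subsetI)
        fix \<sigma> assume "\<sigma> \<in> h ` (Q1 \<times> Q2)"
        then obtain p1 p2 where a: "p1 permutes I" "p2 permutes U - I" "\<sigma> = t \<circ> p1 \<circ> p2"
          by (auto simp: Q1_def Q2_def h_def)
        have p1U: "p1 permutes U" by (rule permutes_subset[OF a(1) IU])
        have p2U: "p2 permutes U" by (rule permutes_subset[OF a(2)]) auto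
        have "\<sigma> permutes U" unfolding a(3) by (intro permutes_compose p1U p2U t(1))
        moreover have "p2 ` I = I"
          using a(2) by (auto simp: permutes_not_in image_iff)
        then have "\<sigma> ` I = J" unfolding a(3) image_comp[symmetric] using permutes_image[OF a(1)] t(2) by simp
        ultimately show "\<sigma> \<in> {\<sigma>. \<sigma> \<in> P \<and> \<sigma> ` I = J}" by (simp add: P_def)
      next
        fix \<sigma> assume "\<sigma> \<in> {\<sigma>. \<sigma> \<in> P \<and> \<sigma> ` I = J}"
        then have s: "\<sigma> permutes U" "\<sigma> ` I = J" by (auto simp: P_def)
        define rh where "rh = Hilbert_Choice.inv t \<circ> \<sigma>"
        have rh: "rh permutes U" unfolding rh_def by (intro permutes_compose s(1) permutes_inv t(1))
        have tr: "t (rh x) = \<sigma> x" for x unfolding rh_def using t(1) by (simp add: permutes_inverses)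
        have rhI: "rh ` I = I"
        proof -
          have "rh ` I = Hilbert_Choice.inv t ` (\<sigma> ` I)" by (simp add: rh_def image_comp)
          also have "\<dots> = Hilbert_Choice.inv t ` (t ` I)" using s(2) t(2) by simp
          also have "\<dots> = I" using t(1) by (simp add: image_comp permutes_inv_o)
          finally show ?thesis .
        qed
        have rhUI: "rh ` (U - I) = U - I"
        proof -
          have "rh ` (U - I) = rh ` U - rh ` I"
            by (rule image_set_diff[OF permutes_inj[OF rh]])
          then show ?thesis using rhI permutes_image[OF rh] by simp
        qed
        define p1 where "p1 = (\<lambda>x. if x \<in> I then rh x else x)"
        define p2 where "p2 = (\<lambda>x. if x \<in> U - I then rh x else x)"
        have injr: "inj rh" using rh by (rule permutes_inj)
        have "p1 permutes I"
        proof (rule bij_imp_permutes)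
          have "bij_betw rh I I" using rhI injr by (simp add: bij_betw_def inj_on_subset[OF injr])
          then show "bij_betw p1 I I" by (rule bij_betw_cong[THEN iffD1, rotated]) (simp add: p1_def)
        qed (simp add: p1_def)
        moreover have "p2 permutes U - I"
        proof (rule bij_imp_permutes)
          have "bij_betw rh (U - I) (U - I)" using rhUI injr by (simp add: bij_betw_def inj_on_subset[OF injr])
          then show "bij_betw p2 (U - I) (U - I)" by (rule bij_betw_cong[THEN iffD1, rotated]) (simp add: p2_def)
        qed (auto simp: p2_def)
        moreover have "\<sigma> = t \<circ> p1 \<circ> p2"
        proof
          fix x
          show "\<sigma> x = (t \<circ> p1 \<circ> p2) x"
          proof (cases "x \<in> U")
            case False
            then have "\<sigma> x = x" "rh x = x" using s(1) rh by (auto intro: permutes_not_in)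
            then show ?thesis using False tr[of x] by (simp add: p1_def p2_def)
          next
            case True
            show ?thesis
            proof (cases "x \<in> I")
              case True
              then show ?thesis using tr[of x] by (simp add: p1_def p2_def)
            next
              case False
              then have "rh x \<in> U - I" using rhUI \<open>x \<in> U\<close> by blast
              then show ?thesis using tr[of x] False \<open>x \<in> U\<close> by (simp add: p1_def p2_def)
            qed
          qed
        qed
        ultimately show "\<sigma> \<in> h ` (Q1 \<times> Q2)" unfolding h_def Q1_def Q2_def by auto
      qed
    qed
    have termh: "trm (h (p1, p2)) = of_int (sign t) * (of_int (sign p1) * (\<Prod>r\<in>I. F r (t (p1 r))))
        * (of_int (sign p2) * (\<Prod>r\<in>U - I. F r (t (p2 r))))"
      if "p1 \<in> Q1" "p2 \<in> Q2" for p1 p2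
    proof -
      have p1: "p1 permutes I" and p2: "p2 permutes U - I" using that by (auto simp: Q1_def Q2_def)
      have p1U: "p1 permutes U" by (rule permutes_subset[OF p1 IU])
      have p2U: "p2 permutes U" by (rule permutes_subset[OF p2]) auto
      have pt: "permutation t" "permutation p1" "permutation p2"
        using t(1) p1U p2U U by (auto intro: permutes_imp_permutation)
      have sg: "sign (t \<circ> p1 \<circ> p2) = sign t * sign p1 * sign p2"
        using pt by (simp add: sign_compose permutation_compose)
      have "(\<Prod>r\<in>U. F r ((t \<circ> p1 \<circ> p2) r)) = (\<Prod>r\<in>U - I. F r ((t \<circ> p1 \<circ> p2) r)) * (\<Prod>r\<in>I. F r ((t \<circ> p1 \<circ> p2) r))"
        by (rule prod.subset_diff[OF IU U])
      also have "(\<Prod>r\<in>U - I. F r ((t \<circ> p1 \<circ> p2) r)) = (\<Prod>r\<in>U - I. F r (t (p2 r)))"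
      proof (intro prod.cong refl)
        fix r assume "r \<in> U - I"
        then have "p2 r \<in> U - I" using permutes_in_image[OF p2] by blast
        then have "p1 (p2 r) = p2 r" using p1 by (intro permutes_not_in) auto
        then show "F r ((t \<circ> p1 \<circ> p2) r) = F r (t (p2 r))" by simp
      qed
      also have "(\<Prod>r\<in>I. F r ((t \<circ> p1 \<circ> p2) r)) = (\<Prod>r\<in>I. F r (t (p1 r)))"
      proof (intro prod.cong refl)
        fix r assume "r \<in> I"
        then have "p2 r = r" using p2 by (intro permutes_not_in) auto
        then show "F r ((t \<circ> p1 \<circ> p2) r) = F r (t (p1 r))" by simp
      qed
      finally show ?thesis unfolding trm_def h_def using sg by (simp add: mult_ac)
    qed
    have "sum trm {\<sigma>. \<sigma> \<in> P \<and> \<sigma> ` I = J} = sum (trm \<circ> h) (Q1 \<times> Q2)"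
      by (rule sum.reindex_bij_betw[OF bij, symmetric, unfolded o_def[symmetric]])
    also have "\<dots> = (\<Sum>p1\<in>Q1. \<Sum>p2\<in>Q2. of_int (sign t) * (of_int (sign p1) * (\<Prod>r\<in>I. F r (t (p1 r))))
        * (of_int (sign p2) * (\<Prod>r\<in>U - I. F r (t (p2 r)))))"
      unfolding sum.cartesian_product by (intro sum.cong refl) (auto simp: termh)
    also have "\<dots> = of_int (sign t) * LS I (\<lambda>r s. F r (t s)) * LS (U - I) (\<lambda>r s. F r (t s))"
      unfolding LS_def Q1_def Q2_def by (rule sum_sum_prod)
    finally show "sum trm {\<sigma>. \<sigma> \<in> P \<and> \<sigma> ` I = J} = of_int (sign (\<tau> J)) * LS I (\<lambda>r s. F r (\<tau> J s)) * LS (U - I) (\<lambda>r s. F r (\<tau> J s))"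
      by (simp add: t_def)
  qed
  finally show ?thesis unfolding JJ_def .
qed

lemma tau_props:
  fixes N :: nat and I J :: "nat set"
  assumes IU: "I \<subseteq> {1..N}" and JU: "J \<subseteq> {1..N}" and cJ: "card J = card I"
  defines "t \<equiv> (\<lambda>x. case map_of (zip (sorted_list_of_set I @ sorted_list_of_set ({1..N} - I))
      (sorted_list_of_set J @ sorted_list_of_set ({1..N} - J))) x of Some y \<Rightarrow> y | None \<Rightarrow> x)"
  shows "t permutes {1..N}" "\<And>m. m < card I \<Longrightarrow> t (en I m) = en J m"
    "\<And>m. m < card ({1..N} - I) \<Longrightarrow> t (en ({1..N} - I) m) = en ({1..N} - J) m"
    "t ` I = J"
proof -
  let ?U = "{1..N::nat}"
  have fI: "finite I" and fJ: "finite J" using IU JU by (auto intro: finite_subset)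
  have cD: "card (?U - J) = card (?U - I)"
    using IU JU cJ fI fJ by (simp add: card_Diff_subset)
  define xs where "xs = sorted_list_of_set I @ sorted_list_of_set (?U - I)"
  define ys where "ys = sorted_list_of_set J @ sorted_list_of_set (?U - J)"
  have dx: "distinct xs" unfolding xs_def by (auto simp: distinct_sorted_list_of_set fI)
  have dy: "distinct ys" unfolding ys_def by (auto simp: distinct_sorted_list_of_set fJ)
  have lxy: "length xs = length ys" unfolding xs_def ys_def using cJ cD by simp
  have sx: "set xs = ?U" unfolding xs_def using IU fI by auto
  have sy: "set ys = ?U" unfolding ys_def using JU fJ by auto
  note mp = map_of_perm[OF dx dy lxy sx sy]
  have teq: "t = (\<lambda>x. case map_of (zip xs ys) x of Some y \<Rightarrow> y | None \<Rightarrow> x)"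
    unfolding t_def xs_def ys_def ..
  show "t permutes ?U" unfolding teq by (rule mp(1))
  show t2: "t (en I m) = en J m" if "m < card I" for m
  proof -
    have "xs ! m = en I m" "ys ! m = en J m" using that cJ fI fJ by (auto simp: xs_def ys_def nth_append)
    moreover have "m < length xs" using that by (simp add: xs_def)
    moreover have "t (xs ! m) = ys ! m" unfolding teq by (rule mp(2)) (use calculation in simp)
    ultimately show ?thesis by simp
  qed
  show "t (en (?U - I) m) = en (?U - J) m" if "m < card (?U - I)" for m
  proof -
    have "xs ! (card I + m) = en (?U - I) m" "ys ! (card I + m) = en (?U - J) m"
      using nth_append_length_plus[of "sorted_list_of_set I" "sorted_list_of_set (?U - I)" m]
        nth_append_length_plus[of "sorted_list_of_set J" "sorted_list_of_set (?U - J)" m]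
      using cJ by (simp_all add: xs_def ys_def)
    moreover have "card I + m < length xs" using that by (simp add: xs_def)
    moreover have "t (xs ! (card I + m)) = ys ! (card I + m)" unfolding teq by (rule mp(2)) (use calculation in simp)
    ultimately show ?thesis by simp
  qed
  have "t ` I = t ` (en I ` {0..<card I})" using en_bij[OF fI] by (simp add: bij_betw_def)
  also have "\<dots> = en J ` {0..<card I}" by (auto simp: image_comp t2 intro!: image_cong)
  also have "\<dots> = J" using en_bij[OF fJ] cJ by (simp add: bij_betw_def)
  finally show "t ` I = J" .
qed

lemma LS_cong:
  assumes "\<And>r s. r \<in> A \<Longrightarrow> s \<in> A \<Longrightarrow> F r s = G r s"
  shows "LS A F = LS A G"
  unfolding LS_def
proof (intro sum.cong refl arg_cong2[where f="(*)"] prod.cong)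
  fix \<pi> r assume "\<pi> \<in> {\<pi>. \<pi> permutes A}" "r \<in> A"
  then show "F r (\<pi> r) = G r (\<pi> r)" using assms by (simp add: permutes_in_image)
qed

lemma en_interval:
  assumes "a < Suc b - m" shows "en {m..b} a = m + a"
proof -
  have "{m..b} = {m..<Suc b}" by auto
  then have "en {m..b} a = [m..<Suc b] ! a" by (simp only: sorted_list_of_set_range)
  also have "\<dots> = m + a" using assms by (subst nth_upt) auto
  finally show ?thesis .
qed

theorem corollary2p4:
  fixes N k :: nat and \<xi> :: "nat \<Rightarrow> 'a::comm_ring_1"
  assumes "N \<ge> 1" and "k \<le> N"
  shows "(\<Sum>J\<in>{J. J \<subseteq> {1..N} \<and> card J = k}.
            of_int (sgnIJ N {N-k+1..N} J)
            * (\<Prod>i\<in>J. (\<xi> i - 1) ^ (N - k))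
            * (\<Prod>(i,j)\<in>{(i,j). i \<in> J \<and> j \<in> J \<and> i < j}. \<xi> j - \<xi> i)
            * (\<Prod>(i,j)\<in>{(i,j). i \<in> {1..N} - J \<and> j \<in> {1..N} - J \<and> i < j}. \<xi> j - \<xi> i))
         = (\<Prod>(i,j)\<in>{(i,j). 1 \<le> i \<and> i < j \<and> j \<le> N}. \<xi> j - \<xi> i)"
proof -
  define U where "U = {1..N}"
  define I where "I = {N-k+1..N}"
  define y where "y = (\<lambda>c. \<xi> c - 1)"
  define F where "F = (\<lambda>r c. y c ^ (r - 1))"
  define \<tau> where "\<tau> = (\<lambda>J x. case map_of (zip (sorted_list_of_set I @ sorted_list_of_set ({1..N} - I))
      (sorted_list_of_set J @ sorted_list_of_set ({1..N} - J))) x of Some y \<Rightarrow> y | None \<Rightarrow> x)"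
  have fU: "finite U" by (simp add: U_def)
  have IU: "I \<subseteq> U" by (auto simp: I_def U_def)
  have fI: "finite I" by (simp add: I_def)
  have cI: "card I = k" using assms by (simp add: I_def)
  have UI: "U - I = {1..N-k}" using assms by (auto simp: U_def I_def)
  have cUI: "card (U - I) = N - k" unfolding UI by simp
  have enI: "en I a = N - k + 1 + a" if "a < k" for a
    unfolding I_def using that assms by (subst en_interval) auto
  have enUI: "en (U - I) a = 1 + a" if "a < N - k" for a
    unfolding UI using that by (subst en_interval) auto
  have enU: "en U a = 1 + a" if "a < N" for a
    unfolding U_def using that by (subst en_interval) auto
  have ydiff: "y j - y i = \<xi> j - \<xi> i" for i j by (simp add: y_def)
  have sg: "sgnIJ N I J = sign (\<tau> J)" for J
    unfolding sgnIJ_def \<tau>_def Let_def ..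
  have tp: "\<tau> J permutes U" "\<And>m. m < card I \<Longrightarrow> \<tau> J (en I m) = en J m"
    "\<And>m. m < card (U - I) \<Longrightarrow> \<tau> J (en (U - I) m) = en (U - J) m" "\<tau> J ` I = J"
    if "J \<subseteq> U" "card J = card I" for J
    using tau_props[of I N J] that IU unfolding \<tau>_def U_def by auto
  have full: "LS U F = (\<Prod>(i,j)\<in>{(i,j). 1 \<le> i \<and> i < j \<and> j \<le> N}. \<xi> j - \<xi> i)"
  proof -
    have cU: "card U = N" by (simp add: U_def)
    have "LS U F = LS {0..<N} (\<lambda>a b. F (en U a) (en U b))"
      using LS_reindex[OF en_bij[OF fU] finite_atLeastLessThan, of F] cU by simp
    also have "\<dots> = LS {0..<N} (\<lambda>a b. (y \<circ> en U) b ^ a)"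
      by (rule LS_cong) (simp add: F_def enU)
    also have "\<dots> = (\<Prod>(a,b)\<in>{(a,b). a<b \<and> b<N}. y (en U b) - y (en U a))"
      by (simp add: LS_vdm)
    also have "\<dots> = (\<Prod>(i,j)\<in>{(i,j). i\<in>U \<and> j\<in>U \<and> i<j}. \<xi> j - \<xi> i)"
      using en_pairs[OF fU, of "\<lambda>i j. \<xi> j - \<xi> i"] cU by (simp add: ydiff)
    also have "{(i,j). i\<in>U \<and> j\<in>U \<and> i<j} = {(i,j). 1 \<le> i \<and> i < j \<and> j \<le> N}"
      by (auto simp: U_def)
    finally show ?thesis .
  qed
  have part: "of_int (sign (\<tau> J)) * LS I (\<lambda>r s. F r (\<tau> J s)) * LS (U - I) (\<lambda>r s. F r (\<tau> J s)) =
      of_int (sgnIJ N {N-k+1..N} J)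
            * (\<Prod>i\<in>J. (\<xi> i - 1) ^ (N - k))
            * (\<Prod>(i,j)\<in>{(i,j). i \<in> J \<and> j \<in> J \<and> i < j}. \<xi> j - \<xi> i)
            * (\<Prod>(i,j)\<in>{(i,j). i \<in> {1..N} - J \<and> j \<in> {1..N} - J \<and> i < j}. \<xi> j - \<xi> i)"
    if J: "J \<in> {J. J \<subseteq> U \<and> card J = card I}" for J
  proof -
    have JU: "J \<subseteq> U" and cJ: "card J = k" using J cI by auto
    have fJ: "finite J" using JU fU by (rule finite_subset)
    have fUJ: "finite (U - J)" using fU by simp
    have cUJ: "card (U - J) = N - k" using JU fJ cJ by (simp add: card_Diff_subset U_def)
    note t = tp[OF JU J[simplified, THEN conjunct2]]
    have X1: "LS I (\<lambda>r s. F r (\<tau> J s)) = (\<Prod>i\<in>J. (\<xi> i - 1) ^ (N - k)) * (\<Prod>(i,j)\<in>{(i,j). i \<in> J \<and> j \<in> J \<and> i < j}. \<xi> j - \<xi> i)"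
    proof -
      have "LS I (\<lambda>r s. F r (\<tau> J s)) = LS {0..<k} (\<lambda>a b. F (en I a) (\<tau> J (en I b)))"
        using LS_reindex[OF en_bij[OF fI] finite_atLeastLessThan, of "\<lambda>r s. F r (\<tau> J s)"] cI by simp
      also have "\<dots> = LS {0..<k} (\<lambda>a b. y (en J b) ^ (N - k) * (y \<circ> en J) b ^ a)"
      proof (rule LS_cong)
        fix a b assume "a \<in> {0..<k}" "b \<in> {0..<k}"
        then have "\<tau> J (en I b) = en J b" "en I a - 1 = N - k + a" using t(2) cI enI by auto
        then show "F (en I a) (\<tau> J (en I b)) = y (en J b) ^ (N - k) * (y \<circ> en J) b ^ a"
          by (simp add: F_def power_add)
      qed
      also have "\<dots> = (\<Prod>b\<in>{0..<k}. y (en J b) ^ (N - k)) * LS {0..<k} (\<lambda>a b. (y \<circ> en J) b ^ a)"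
        by (rule LS_factor) simp
      also have "(\<Prod>b\<in>{0..<k}. y (en J b) ^ (N - k)) = (\<Prod>i\<in>J. (\<xi> i - 1) ^ (N - k))"
        using prod.reindex_bij_betw[OF en_bij[OF fJ], of "\<lambda>j. y j ^ (N - k)"] cJ by (simp add: y_def)
      also have "LS {0..<k} (\<lambda>a b. (y \<circ> en J) b ^ a) = (\<Prod>(a,b)\<in>{(a,b). a<b \<and> b<k}. y (en J b) - y (en J a))"
        by (simp add: LS_vdm)
      also have "\<dots> = (\<Prod>(i,j)\<in>{(i,j). i \<in> J \<and> j \<in> J \<and> i < j}. \<xi> j - \<xi> i)"
        using en_pairs[OF fJ, of "\<lambda>i j. \<xi> j - \<xi> i"] cJ by (simp add: ydiff)
      finally show ?thesis .
    qed
    have X2: "LS (U - I) (\<lambda>r s. F r (\<tau> J s)) = (\<Prod>(i,j)\<in>{(i,j). i \<in> {1..N} - J \<and> j \<in> {1..N} - J \<and> i < j}. \<xi> j - \<xi> i)"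
    proof -
      have fUI: "finite (U - I)" using fU by simp
      have "LS (U - I) (\<lambda>r s. F r (\<tau> J s)) = LS {0..<N-k} (\<lambda>a b. F (en (U - I) a) (\<tau> J (en (U - I) b)))"
        using LS_reindex[OF en_bij[OF fUI] finite_atLeastLessThan, of "\<lambda>r s. F r (\<tau> J s)"] cUI by simp
      also have "\<dots> = LS {0..<N-k} (\<lambda>a b. (y \<circ> en (U - J)) b ^ a)"
      proof (rule LS_cong)
        fix a b assume "a \<in> {0..<N-k}" "b \<in> {0..<N-k}"
        then have "\<tau> J (en (U - I) b) = en (U - J) b" "en (U - I) a - 1 = a" using t(3) cUI enUI by auto
        then show "F (en (U - I) a) (\<tau> J (en (U - I) b)) = (y \<circ> en (U - J)) b ^ a"
          by (simp add: F_def)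
      qed
      also have "\<dots> = (\<Prod>(a,b)\<in>{(a,b). a<b \<and> b<N-k}. y (en (U - J) b) - y (en (U - J) a))"
        by (simp add: LS_vdm)
      also have "\<dots> = (\<Prod>(i,j)\<in>{(i,j). i \<in> U - J \<and> j \<in> U - J \<and> i < j}. \<xi> j - \<xi> i)"
        using en_pairs[OF fUJ, of "\<lambda>i j. \<xi> j - \<xi> i"] cUJ by (simp add: ydiff)
      finally show ?thesis by (simp add: U_def)
    qed
    have sg': "sgnIJ N {N-k+1..N} J = sign (\<tau> J)" unfolding I_def[symmetric] by (rule sg)
    show ?thesis unfolding X1 X2 sg' by (simp only: mult.assoc)
  qed
  have "LS U F = (\<Sum>J\<in>{J. J \<subseteq> U \<and> card J = card I}.
     of_int (sign (\<tau> J)) * LS I (\<lambda>r s. F r (\<tau> J s)) * LS (U - I) (\<lambda>r s. F r (\<tau> J s)))"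
  proof (rule laplace_gen[OF fU IU])
    fix J assume "J \<subseteq> U" "card J = card I"
    then show "\<tau> J permutes U \<and> \<tau> J ` I = J" using tp(1)[of J] tp(4)[of J] by simp
  qed
  also have "\<dots> = (\<Sum>J\<in>{J. J \<subseteq> {1..N} \<and> card J = k}.
            of_int (sgnIJ N {N-k+1..N} J)
            * (\<Prod>i\<in>J. (\<xi> i - 1) ^ (N - k))
            * (\<Prod>(i,j)\<in>{(i,j). i \<in> J \<and> j \<in> J \<and> i < j}. \<xi> j - \<xi> i)
            * (\<Prod>(i,j)\<in>{(i,j). i \<in> {1..N} - J \<and> j \<in> {1..N} - J \<and> i < j}. \<xi> j - \<xi> i))"
    using part by (intro sum.cong) (auto simp: U_def cI)
  finally show ?thesis using full by simp
qed

end
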